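(* Let $p$ be a prime and let $\lambda_1\ge\lambda_2\ge\cdots$ and $\nu_1\ge\nu_2\ge\cdots$ be finitely supported sequences of nonnegative integers with $\nu_i\le\lambda_i$ for all $i$. Then $$\prod_{i\ge1}p^{\nu_i(\lambda_i-\nu_i)}\ \le\ \prod_{i\ge1}p^{\nu_{i+1}(\lambda_i-\nu_i)}\begin{bmatrix}\lambda_i-\nu_{i+1}\\ \nu_i-\nu_{i+1}\end{bmatrix}_p\ \le\ p^{\nu_1}\prod_{i\ge1}p^{\nu_i(\lambda_i-\nu_i)}.$$
   Context: $\begin{bmatrix}\lambda\\ \nu\end{bmatrix}_p$ denotes the $p$-binomial coefficient, i.e. the number of $\nu$-dimensional subspaces of a $\lambda$-dimensional vector space over $\mathbb Z/p\mathbb Z$. *)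

theory Defs
  imports Main "HOL-Computational_Algebra.Primes"
begin

text \<open>The vector space (Z/pZ)^n, realised as functions nat => nat with
  entries in {0..<p} and support in {0..<n}; operations are taken mod p.\<close>

definition Fvecs :: "nat \<Rightarrow> nat \<Rightarrow> (nat \<Rightarrow> nat) set" where
  "Fvecs p n = {v. (\<forall>i. v i < p) \<and> (\<forall>i\<ge>n. v i = 0)}"

definition vadd :: "nat \<Rightarrow> (nat \<Rightarrow> nat) \<Rightarrow> (nat \<Rightarrow> nat) \<Rightarrow> (nat \<Rightarrow> nat)" where
  "vadd p u v = (\<lambda>i. (u i + v i) mod p)"

definition vsmult :: "nat \<Rightarrow> nat \<Rightarrow> (nat \<Rightarrow> nat) \<Rightarrow> (nat \<Rightarrow> nat)" where
  "vsmult p c v = (\<lambda>i. (c * v i) mod p)"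

definition lincomb :: "nat \<Rightarrow> (nat \<Rightarrow> nat) \<Rightarrow> (nat \<Rightarrow> nat \<Rightarrow> nat) \<Rightarrow> nat \<Rightarrow> (nat \<Rightarrow> nat)" where
  "lincomb p c b k = (\<lambda>i. (\<Sum>j<k. c j * b j i) mod p)"

definition is_subspace :: "nat \<Rightarrow> nat \<Rightarrow> (nat \<Rightarrow> nat) set \<Rightarrow> bool" where
  "is_subspace p n W \<longleftrightarrow> W \<subseteq> Fvecs p n \<and> (\<lambda>_. 0) \<in> W \<and>
     (\<forall>u\<in>W. \<forall>v\<in>W. vadd p u v \<in> W) \<and> (\<forall>c<p. \<forall>v\<in>W. vsmult p c v \<in> W)"

definition has_dim :: "nat \<Rightarrow> (nat \<Rightarrow> nat) set \<Rightarrow> nat \<Rightarrow> bool" where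
  "has_dim p W k \<longleftrightarrow> (\<exists>b. (\<forall>j<k. b j \<in> W) \<and>
     W = {lincomb p c b k | c. \<forall>j<k. c j < p} \<and>
     (\<forall>c. (\<forall>j<k. c j < p) \<longrightarrow> lincomb p c b k = (\<lambda>_. 0) \<longrightarrow> (\<forall>j<k. c j = 0)))"

definition pbinom :: "nat \<Rightarrow> nat \<Rightarrow> nat \<Rightarrow> nat" where
  "pbinom p n k = card {W. is_subspace p n W \<and> has_dim p W k}"

end

theory Submission
  imports Defs "HOL-Number_Theory.Cong"
begin

definition funcs :: "nat \<Rightarrow> 'a set \<Rightarrow> 'a \<Rightarrow> (nat \<Rightarrow> 'a) set" where
  "funcs k A d = {f. (\<forall>i<k. f i \<in> A) \<and> (\<forall>i\<ge>k. f i = d)}"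

lemma funcs_0: "funcs 0 A d = {\<lambda>_. d}"
  unfolding funcs_def by auto

lemma funcs_Suc: "funcs (Suc k) A d = (\<lambda>(a,f). f(k:=a)) ` (A \<times> funcs k A d)"
proof
  show "funcs (Suc k) A d \<subseteq> (\<lambda>(a,f). f(k:=a)) ` (A \<times> funcs k A d)"
  proof
    fix f assume f: "f \<in> funcs (Suc k) A d"
    have "f = (\<lambda>(a,g). g(k:=a)) (f k, f(k:=d))" by auto
    moreover have "(f k, f(k:=d)) \<in> A \<times> funcs k A d"
      using f unfolding funcs_def by auto
    ultimately show "f \<in> (\<lambda>(a,f). f(k:=a)) ` (A \<times> funcs k A d)" by blast
  qed
next
  show "(\<lambda>(a,f). f(k:=a)) ` (A \<times> funcs k A d) \<subseteq> funcs (Suc k) A d"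
    unfolding funcs_def by auto
qed

lemma funcs_Suc_inj: "inj_on (\<lambda>(a,f). f(k:=a)) (A \<times> funcs k A d)"
proof (rule inj_onI, clarify)
  fix a f b g assume f: "f \<in> funcs k A d" and g: "g \<in> funcs k A d" and e: "f(k:=a) = g(k:=b)"
  have "a = b" using fun_cong[OF e, of k] by simp
  moreover have "f = g"
  proof
    fix i show "f i = g i"
      using fun_cong[OF e, of i] f g unfolding funcs_def by (cases "i = k") auto
  qed
  ultimately show "a = b \<and> f = g" by simp
qed

lemma card_funcs: "finite A \<Longrightarrow> finite (funcs k A d) \<and> card (funcs k A d) = card A ^ k"
proof (induction k)
  case 0 then show ?case by (simp add: funcs_0)
next
  case (Suc k)
  then show ?case
    unfolding funcs_Suc using card_image[OF funcs_Suc_inj[of k A d]]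
    by (simp add: card_cartesian_product)
qed

lemma Fvecs_funcs: "p > 0 \<Longrightarrow> Fvecs p n = funcs n {0..<p} 0"
  unfolding Fvecs_def funcs_def by (auto, metis linorder_not_le)

lemma Fvecs_card: "p > 0 \<Longrightarrow> finite (Fvecs p n) \<and> card (Fvecs p n) = p ^ n"
  using card_funcs[of "{0..<p}" n 0] by (simp add: Fvecs_funcs)

definition spn :: "nat \<Rightarrow> (nat \<Rightarrow> nat \<Rightarrow> nat) \<Rightarrow> nat \<Rightarrow> (nat \<Rightarrow> nat) set" where
  "spn p b k = {lincomb p c b k | c. \<forall>j<k. c j < p}"

definition indep :: "nat \<Rightarrow> (nat \<Rightarrow> nat \<Rightarrow> nat) \<Rightarrow> nat \<Rightarrow> bool" where
  "indep p b k \<longleftrightarrow> (\<forall>c. (\<forall>j<k. c j < p) \<longrightarrow> lincomb p c b k = (\<lambda>_. 0) \<longrightarrow> (\<forall>j<k. c j = 0))"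

lemma has_dim_alt: "has_dim p W k \<longleftrightarrow> (\<exists>b. (\<forall>j<k. b j \<in> W) \<and> W = spn p b k \<and> indep p b k)"
  unfolding has_dim_def spn_def indep_def by blast

lemma lincomb_cong_coeff:
  assumes "\<And>j. j < k \<Longrightarrow> c j mod p = d j mod p"
  shows "lincomb p c b k = lincomb p d b k"
proof
  fix i
  have "(\<Sum>j<k. c j * b j i) mod p = (\<Sum>j<k. (c j * b j i) mod p) mod p" by (simp add: mod_sum_eq)
  also have "\<dots> = (\<Sum>j<k. (d j * b j i) mod p) mod p"
  proof -
    have mj: "(c j * b j i) mod p = (d j * b j i) mod p" if "j < k" for j
    proof -
      have cd: "c j mod p = d j mod p" using assms that by simp
      have "(c j * b j i) mod p = ((c j mod p) * b j i) mod p" by (rule mod_mult_left_eq[symmetric])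
      also have "\<dots> = ((d j mod p) * b j i) mod p" unfolding cd ..
      also have "\<dots> = (d j * b j i) mod p" by (rule mod_mult_left_eq)
      finally show ?thesis .
    qed
    have "(\<Sum>j<k. (c j * b j i) mod p) = (\<Sum>j<k. (d j * b j i) mod p)"
      by (rule sum.cong) (auto simp: mj)
    then show ?thesis by simp
  qed
  also have "\<dots> = (\<Sum>j<k. d j * b j i) mod p" by (simp add: mod_sum_eq)
  finally show "lincomb p c b k i = lincomb p d b k i" unfolding lincomb_def .
qed

lemma lincomb_cong_basis:
  assumes "\<And>j. j < k \<Longrightarrow> b j = b' j"
  shows "lincomb p c b k = lincomb p c b' k"
  unfolding lincomb_def using assms by (intro ext arg_cong[where f="\<lambda>x. x mod p"] sum.cong) auto

lemma lincomb_Fvecs: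
  assumes "p > 0" "\<And>j. j < k \<Longrightarrow> b j \<in> Fvecs p n"
  shows "lincomb p c b k \<in> Fvecs p n"
  using assms unfolding Fvecs_def lincomb_def by auto

lemma lincomb_add: "vadd p (lincomb p c b k) (lincomb p d b k) = lincomb p (\<lambda>j. c j + d j) b k"
proof
  fix i
  have "(\<Sum>j<k. (c j + d j) * b j i) = (\<Sum>j<k. c j * b j i) + (\<Sum>j<k. d j * b j i)"
    by (simp add: algebra_simps sum.distrib)
  then show "vadd p (lincomb p c b k) (lincomb p d b k) i = lincomb p (\<lambda>j. c j + d j) b k i"
    unfolding vadd_def lincomb_def by (simp add: mod_add_eq)
qed

lemma lincomb_smult: "vsmult p a (lincomb p c b k) = lincomb p (\<lambda>j. a * c j) b k"
proof
  fix i
  have e: "a * (\<Sum>j<k. c j * b j i) = (\<Sum>j<k. a * c j * b j i)"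
    by (simp add: sum_distrib_left algebra_simps)
  have "(a * ((\<Sum>j<k. c j * b j i) mod p)) mod p = (a * (\<Sum>j<k. c j * b j i)) mod p"
    by (rule mod_mult_right_eq)
  then show "vsmult p a (lincomb p c b k) i = lincomb p (\<lambda>j. a * c j) b k i"
    unfolding vsmult_def lincomb_def e .
qed

lemma lincomb_0: "lincomb p (\<lambda>_. 0) b k = (\<lambda>_. 0)"
  unfolding lincomb_def by simp

lemma spn_subspace:
  assumes "p > 0" "\<And>j. j < k \<Longrightarrow> b j \<in> Fvecs p n"
  shows "is_subspace p n (spn p b k)"
  unfolding is_subspace_def
proof (intro conjI ballI allI impI)
  show "spn p b k \<subseteq> Fvecs p n" unfolding spn_def using lincomb_Fvecs[OF assms] by auto
  have "(\<lambda>_. 0) = lincomb p (\<lambda>_. 0) b k" by (simp add: lincomb_0)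
  then show "(\<lambda>_. 0) \<in> spn p b k" unfolding spn_def using assms(1) by auto
next
  fix u v assume "u \<in> spn p b k" "v \<in> spn p b k"
  then obtain c d where u: "u = lincomb p c b k" and v: "v = lincomb p d b k" unfolding spn_def by auto
  have "vadd p u v = lincomb p (\<lambda>j. (c j + d j) mod p) b k"
    unfolding u v lincomb_add by (rule lincomb_cong_coeff) simp
  then show "vadd p u v \<in> spn p b k" unfolding spn_def using assms(1) by auto
next
  fix a v assume "a < p" "v \<in> spn p b k"
  then obtain d where v: "v = lincomb p d b k" unfolding spn_def by auto
  have "vsmult p a v = lincomb p (\<lambda>j. (a * d j) mod p) b k"
    unfolding v lincomb_smult by (rule lincomb_cong_coeff) simp
  then show "vsmult p a v \<in> spn p b k" unfolding spn_def using assms(1) by auto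
qed

lemma spn_image: assumes "p > 0" shows "spn p b k = (\<lambda>c. lincomb p c b k) ` Fvecs p k"
proof
  show "spn p b k \<subseteq> (\<lambda>c. lincomb p c b k) ` Fvecs p k"
  proof
    fix v assume "v \<in> spn p b k"
    then obtain c where c: "\<forall>j<k. c j < p" and v: "v = lincomb p c b k" unfolding spn_def by auto
    define c' where "c' = (\<lambda>j. if j < k then c j else 0)"
    have "v = lincomb p c' b k" unfolding v by (rule lincomb_cong_coeff) (simp add: c'_def)
    moreover have "c' \<in> Fvecs p k" unfolding Fvecs_def c'_def using c assms by auto
    ultimately show "v \<in> (\<lambda>c. lincomb p c b k) ` Fvecs p k" by blast
  qed
next
  show "(\<lambda>c. lincomb p c b k) ` Fvecs p k \<subseteq> spn p b k"
    unfolding spn_def Fvecs_def by auto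
qed

lemma spn_card_le: assumes "p > 0" shows "finite (spn p b k) \<and> card (spn p b k) \<le> p ^ k"
  using Fvecs_card[OF assms, of k] card_image_le[of "Fvecs p k" "\<lambda>c. lincomb p c b k"]
  by (simp add: spn_image[OF assms])

lemma subspace_lincomb:
  assumes "p > 0" "is_subspace p n W" "\<And>j. j < k \<Longrightarrow> b j \<in> W"
  shows "lincomb p c b k \<in> W"
  using assms(3)
proof (induction k)
  case 0
  have "lincomb p c b 0 = (\<lambda>_. 0)" unfolding lincomb_def by simp
  then show ?case using assms(2) unfolding is_subspace_def by simp
next
  case (Suc k)
  have e: "lincomb p c b (Suc k) = vadd p (lincomb p c b k) (vsmult p (c k mod p) (b k))"
    unfolding vadd_def vsmult_def lincomb_def by (simp add: mod_add_eq mod_mult_left_eq)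
  have "lincomb p c b k \<in> W" using Suc by auto
  moreover have "vsmult p (c k mod p) (b k) \<in> W" using Suc assms(1,2) unfolding is_subspace_def by auto
  ultimately show ?case unfolding e using assms(2) unfolding is_subspace_def by auto
qed

lemma spn_sub: "p > 0 \<Longrightarrow> is_subspace p n W \<Longrightarrow> (\<And>j. j < k \<Longrightarrow> b j \<in> W) \<Longrightarrow> spn p b k \<subseteq> W"
  unfolding spn_def using subspace_lincomb by blast


lemma modeq_aux:
  assumes "c < p" "d < (p::nat)" "(c + (p - d)) mod p = 0"
  shows "c = d"
proof (cases "d \<le> c")
  case True
  have e1: "c + (p - d) = (c - d) + p" using assms(2) True by simp
  have "c - d < p" using assms(1) by simp
  then have "((c - d) + p) mod p = c - d" by simp
  with e1 assms(3) have "c - d = 0" by simp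
  then show ?thesis using True by simp
next
  case False
  have l1: "c + (p - d) < p" and l2: "c + (p - d) > 0" using False assms(1,2) by auto
  have "(c + (p - d)) mod p = c + (p - d)" using l1 by (rule mod_less)
  then have "(c + (p - d)) mod p \<noteq> 0" using l2 by linarith
  then show ?thesis using assms(3) by simp
qed

lemma indep_inj:
  assumes "p > 0" "indep p b k"
  shows "inj_on (\<lambda>c. lincomb p c b k) (Fvecs p k)"
proof (rule inj_onI)
  fix c d assume c: "c \<in> Fvecs p k" and d: "d \<in> Fvecs p k" and e: "lincomb p c b k = lincomb p d b k"
  define f where "f = (\<lambda>j. c j + (p - d j))"
  have "lincomb p f b k = (\<lambda>_. 0)"
  proof
    fix i
    have s1: "(\<Sum>j<k. f j * b j i) = (\<Sum>j<k. c j * b j i) + (\<Sum>j<k. (p - d j) * b j i)"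
      by (simp add: f_def algebra_simps sum.distrib)
    have s2: "(\<Sum>j<k. d j * b j i) + (\<Sum>j<k. (p - d j) * b j i) = p * (\<Sum>j<k. b j i)"
    proof -
      have "(\<Sum>j<k. d j * b j i) + (\<Sum>j<k. (p - d j) * b j i) = (\<Sum>j<k. (d j + (p - d j)) * b j i)"
        by (simp add: sum.distrib add_mult_distrib)
      also have "\<dots> = (\<Sum>j<k. p * b j i)"
      proof (intro sum.cong refl)
        fix j assume "j \<in> {..<k}"
        have "d j < p" using d unfolding Fvecs_def by auto
        then show "(d j + (p - d j)) * b j i = p * b j i" by simp
      qed
      finally show ?thesis by (simp add: sum_distrib_left)
    qed
    have ei: "(\<Sum>j<k. c j * b j i) mod p = (\<Sum>j<k. d j * b j i) mod p"
      using fun_cong[OF e, of i] unfolding lincomb_def .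
    have "(\<Sum>j<k. f j * b j i) mod p = ((\<Sum>j<k. c j * b j i) mod p + (\<Sum>j<k. (p - d j) * b j i)) mod p"
      unfolding s1 by (simp add: mod_add_left_eq)
    also have "\<dots> = ((\<Sum>j<k. d j * b j i) + (\<Sum>j<k. (p - d j) * b j i)) mod p"
      unfolding ei by (simp add: mod_add_left_eq)
    also have "\<dots> = 0" unfolding s2 by simp
    finally show "lincomb p f b k i = 0" unfolding lincomb_def .
  qed
  moreover have "lincomb p (\<lambda>j. f j mod p) b k = lincomb p f b k"
    by (rule lincomb_cong_coeff) simp
  ultimately have L: "lincomb p (\<lambda>j. f j mod p) b k = (\<lambda>_. 0)" by simp
  have ind: "\<And>c. \<forall>j<k. c j < p \<Longrightarrow> lincomb p c b k = (\<lambda>_. 0) \<Longrightarrow> \<forall>j<k. c j = 0"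
    using assms(2) unfolding indep_def by blast
  have M: "\<forall>j<k. f j mod p = 0"
    using ind[of "\<lambda>j. f j mod p", OF _ L] assms(1) by simp
  show "c = d"
  proof
    fix j show "c j = d j"
    proof (cases "j < k")
      case True
      have "c j < p" "d j < p" using c d unfolding Fvecs_def by auto
      moreover have "(c j + (p - d j)) mod p = 0" using M True unfolding f_def by simp
      ultimately show ?thesis by (rule modeq_aux)
    next
      case False
      then show ?thesis using c d unfolding Fvecs_def by auto
    qed
  qed
qed

lemma card_spn_indep: "p > 0 \<Longrightarrow> indep p b k \<Longrightarrow> card (spn p b k) = p ^ k"
proof -
  assume a: "p > 0" "indep p b k"
  have "card (spn p b k) = card (Fvecs p k)"
    unfolding spn_image[OF a(1)] using card_image[OF indep_inj[OF a]] .
  then show ?thesis using Fvecs_card[OF a(1)] by simp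
qed

lemma key_cong:
  assumes "p > 0" "[X + c * v = 0] (mod p)" "[c * d = Suc 0] (mod p)"
  shows "[v = (p - 1) * d * X] (mod p)"
proof -
  have "[int (X + c*v) = int 0] (mod int p)" using assms(2) by (simp only: cong_int_iff)
  then have h1: "int p dvd int X + int c * int v" by (simp add: cong_iff_dvd_diff)
  have "[int (c*d) = int (Suc 0)] (mod int p)" using assms(3) by (simp only: cong_int_iff)
  then have h2: "int p dvd int c * int d - 1" by (simp add: cong_iff_dvd_diff)
  have eq: "int v - (int p - 1) * int d * int X
     = - (int p * int d * int X) + int d * (int X + int c * int v) - (int c * int d - 1) * int v"
    by (simp add: algebra_simps)
  have "int p dvd int v - (int p - 1) * int d * int X"
  proof -
    have d1: "int p dvd - (int p * int d * int X)" by simp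
    have d2: "int p dvd int d * (int X + int c * int v)" using h1 by (rule dvd_mult)
    have d3: "int p dvd (int c * int d - 1) * int v" using h2 by (rule dvd_mult2)
    show ?thesis unfolding eq using d1 d2 d3 by (intro dvd_diff dvd_add)
  qed
  moreover have E: "int ((p - 1) * d * X) = (int p - 1) * int d * int X"
  proof -
    have "int (p - 1) = int p - 1" using assms(1) by (subst of_nat_diff) auto
    then show ?thesis by (simp only: of_nat_mult)
  qed
  ultimately have "[int v = int ((p - 1) * d * X)] (mod int p)"
    by (simp only: cong_iff_dvd_diff E)
  then show ?thesis by (simp only: cong_int_iff)
qed


lemma indep_extend:
  assumes "prime p" "indep p t j" "\<forall>i. v i < p" "v \<notin> spn p t j"
  shows "indep p (t(j:=v)) (Suc j)"
  unfolding indep_def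
proof (rule allI, rule impI, rule impI)
  fix c assume c: "\<forall>l<Suc j. c l < p" and z: "lincomb p c (t(j:=v)) (Suc j) = (\<lambda>_. 0)"
  have p0: "p > 0" using assms(1) prime_gt_0_nat by blast
  have zi: "((\<Sum>l<j. c l * t l i) + c j * v i) mod p = 0" for i
  proof -
    have "(\<Sum>l<j. c l * (t(j:=v)) l i) = (\<Sum>l<j. c l * t l i)" by (rule sum.cong) auto
    then have "(\<Sum>l<Suc j. c l * (t(j:=v)) l i) = (\<Sum>l<j. c l * t l i) + c j * v i" by simp
    then show ?thesis using fun_cong[OF z, of i] unfolding lincomb_def by simp
  qed
  show "\<forall>l<Suc j. c l = 0"
  proof (cases "c j = 0")
    case True
    then have "lincomb p c t j = (\<lambda>_. 0)" using zi unfolding lincomb_def by auto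
    then have "\<forall>l<j. c l = 0" using assms(2) c unfolding indep_def by auto
    with True show ?thesis by (auto simp: less_Suc_eq)
  next
    case False
    have "c j < p" using c by auto
    then have "\<not> p dvd c j" using False by (auto dest: dvd_imp_le)
    then have "coprime p (c j)" using assms(1) by (simp add: prime_imp_coprime)
    then have "coprime (c j) p" by (simp add: coprime_commute)
    then obtain d where d: "[c j * d = Suc 0] (mod p)" using cong_solve_coprime_nat by blast
    have "v = lincomb p (\<lambda>l. (p - 1) * d * c l) t j"
    proof
      fix i
      have "[(\<Sum>l<j. c l * t l i) + c j * v i = 0] (mod p)" using zi[of i] by (simp add: cong_def)
      from key_cong[OF p0 this d]
      have "[v i = (p - 1) * d * (\<Sum>l<j. c l * t l i)] (mod p)" .
      moreover have "(p - 1) * d * (\<Sum>l<j. c l * t l i) = (\<Sum>l<j. (p - 1) * d * c l * t l i)"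
        by (simp add: sum_distrib_left algebra_simps)
      ultimately have "v i mod p = (\<Sum>l<j. (p - 1) * d * c l * t l i) mod p" by (simp add: cong_def)
      moreover have "v i mod p = v i" using assms(3) by simp
      ultimately show "v i = lincomb p (\<lambda>l. (p - 1) * d * c l) t j i" unfolding lincomb_def by simp
    qed
    also have "\<dots> = lincomb p (\<lambda>l. ((p - 1) * d * c l) mod p) t j"
      by (rule lincomb_cong_coeff) simp
    finally have "v \<in> spn p t j" unfolding spn_def using p0 by auto
    with assms(4) show ?thesis by simp
  qed
qed

definition Tset :: "nat \<Rightarrow> (nat \<Rightarrow> nat) set \<Rightarrow> nat \<Rightarrow> (nat \<Rightarrow> nat \<Rightarrow> nat) set" where
  "Tset p W j = {t. (\<forall>l<j. t l \<in> W) \<and> (\<forall>l\<ge>j. t l = (\<lambda>_. 0)) \<and> indep p t j}"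

lemma Tset_sub: "Tset p W j \<subseteq> funcs j W (\<lambda>_. 0)"
  unfolding Tset_def funcs_def by auto

lemma Tset_finite: "finite W \<Longrightarrow> finite (Tset p W j)"
  using card_funcs[of W j "\<lambda>_. 0"] Tset_sub finite_subset by metis

lemma Tset_0: "Tset p W 0 = {\<lambda>_. (\<lambda>_. 0)}"
  unfolding Tset_def indep_def by auto

lemma Tset_grow:
  assumes "prime p" "is_subspace p n W" "finite W" "card W = p ^ k" "j < k"
  shows "card (Tset p W j) * p ^ (k - 1) \<le> card (Tset p W (Suc j))"
proof -
  have p0: "p > 0" using assms(1) prime_gt_0_nat by blast
  have p1: "p \<ge> 2" using assms(1) prime_ge_2_nat by blast
  have WF: "W \<subseteq> Fvecs p n" using assms(2) unfolding is_subspace_def by simp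
  define g where "g = (\<lambda>t. (\<lambda>v. t(j:=v)) ` (W - spn p t j))"
  have sub: "(\<Union>t\<in>Tset p W j. g t) \<subseteq> Tset p W (Suc j)"
  proof (clarify)
    fix t x assume t: "t \<in> Tset p W j" and x: "x \<in> g t"
    then obtain v where v: "v \<in> W" "v \<notin> spn p t j" and xe: "x = t(j:=v)" unfolding g_def by auto
    have "\<forall>i. v i < p" using v WF unfolding Fvecs_def by auto
    then have "indep p x (Suc j)" unfolding xe using indep_extend[OF assms(1) _ _ v(2)] t
      unfolding Tset_def by auto
    then show "x \<in> Tset p W (Suc j)" using t v unfolding Tset_def xe by (auto simp: less_Suc_eq)
  qed
  have disj: "\<forall>t\<in>Tset p W j. \<forall>t'\<in>Tset p W j. t \<noteq> t' \<longrightarrow> g t \<inter> g t' = {}"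
  proof (intro ballI impI)
    fix t t' assume t: "t \<in> Tset p W j" and t': "t' \<in> Tset p W j" and ne: "t \<noteq> t'"
    show "g t \<inter> g t' = {}"
    proof (rule ccontr)
      assume "g t \<inter> g t' \<noteq> {}"
      then obtain v v' where e: "t(j:=v) = t'(j:=v')" unfolding g_def by auto
      have "t = t'"
      proof
        fix l show "t l = t' l"
        proof (cases "l = j")
          case True then show ?thesis using t t' unfolding Tset_def by auto
        next
          case False then show ?thesis using fun_cong[OF e, of l] by simp
        qed
      qed
      with ne show False by simp
    qed
  qed
  have fin: "finite (Tset p W j)" using Tset_finite[OF assms(3)] .
  have cardg: "card (g t) \<ge> p ^ (k - 1)" if t: "t \<in> Tset p W j" for t
  proof -
    have inj: "inj_on (\<lambda>v. t(j:=v)) (W - spn p t j)"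
      by (rule inj_onI) (metis fun_upd_same)
    have ind: "indep p t j" using t unfolding Tset_def by auto
    have ssub: "spn p t j \<subseteq> W"
      using spn_sub[OF p0 assms(2)] t unfolding Tset_def by auto
    have "card (g t) = card (W - spn p t j)" unfolding g_def using card_image[OF inj] .
    also have "\<dots> = p ^ k - p ^ j"
      using card_Diff_subset[OF finite_subset[OF ssub assms(3)] ssub] assms(4) card_spn_indep[OF p0 ind]
      by simp
    finally have cg: "card (g t) = p ^ k - p ^ j" .
    have "p ^ j \<le> p ^ (k - 1)" using assms(5) p0 by (intro power_increasing) auto
    moreover have "p ^ k = p * p ^ (k - 1)" using assms(5) by (metis Suc_diff_1 bot_nat_0.extremum_strict power_Suc gr0I)
    ultimately have "p ^ k - p ^ j \<ge> p * p ^ (k - 1) - p ^ (k - 1)" by simp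
    moreover have "p * p ^ (k - 1) - p ^ (k - 1) \<ge> p ^ (k - 1)"
    proof -
      have "p * p ^ (k - 1) \<ge> 2 * p ^ (k - 1)" using p1 by simp
      then show ?thesis by linarith
    qed
    ultimately show ?thesis using cg by simp
  qed
  have "card (Tset p W j) * p ^ (k - 1) \<le> (\<Sum>t\<in>Tset p W j. card (g t))"
    using sum_bounded_below[of "Tset p W j" "p ^ (k - 1)" "\<lambda>t. card (g t)"] cardg by (simp add: mult.commute)
  also have "\<dots> = card (\<Union>t\<in>Tset p W j. g t)"
    by (rule card_UN_disjoint[symmetric]) (use fin disj in \<open>auto simp: g_def intro: finite_subset[OF _ assms(3)]\<close>)
  also have "\<dots> \<le> card (Tset p W (Suc j))"
    by (rule card_mono[OF Tset_finite[OF assms(3)] sub])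
  finally show ?thesis .
qed

lemma Tset_card:
  assumes "prime p" "is_subspace p n W" "finite W" "card W = p ^ k" "j \<le> k"
  shows "p ^ ((k - 1) * j) \<le> card (Tset p W j)"
  using assms(5)
proof (induction j)
  case 0 then show ?case by (simp add: Tset_0)
next
  case (Suc j)
  then have "p ^ ((k - 1) * j) * p ^ (k - 1) \<le> card (Tset p W j) * p ^ (k - 1)" by simp
  also have "\<dots> \<le> card (Tset p W (Suc j))" using Tset_grow[OF assms(1-4)] Suc by simp
  finally show ?case by (simp add: power_add mult.commute)
qed


lemma dim_facts:
  assumes "prime p" "has_dim p W k"
  shows "finite W \<and> card W = p ^ k"
proof -
  have p0: "p > 0" using assms(1) prime_gt_0_nat by blast
  obtain b where "W = spn p b k" "indep p b k" using assms(2) unfolding has_dim_alt by blast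
  then show ?thesis using spn_card_le[OF p0] card_spn_indep[OF p0] by simp
qed

lemma Tset_spn:
  assumes "prime p" "is_subspace p n W" "has_dim p W k" "t \<in> Tset p W k"
  shows "spn p t k = W"
proof -
  have p0: "p > 0" using assms(1) prime_gt_0_nat by blast
  have W: "finite W" "card W = p ^ k" using dim_facts[OF assms(1,3)] by auto
  have sub: "spn p t k \<subseteq> W" using spn_sub[OF p0 assms(2)] assms(4) unfolding Tset_def by auto
  have "card (spn p t k) = p ^ k" using card_spn_indep[OF p0] assms(4) unfolding Tset_def by auto
  then show ?thesis using card_subset_eq[OF W(1) sub] W(2) by simp
qed

lemma subspaces_finite: "p > 0 \<Longrightarrow> finite {W. is_subspace p n W \<and> has_dim p W k}"
proof -
  assume p0: "p > 0"
  have "{W. is_subspace p n W \<and> has_dim p W k} \<subseteq> Pow (Fvecs p n)"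
    unfolding is_subspace_def by auto
  then show ?thesis using Fvecs_card[OF p0] finite_subset by blast
qed

lemma pbinom_upper:
  assumes "prime p" "k \<le> n"
  shows "pbinom p n k \<le> p ^ (k * (n - k) + k)"
proof -
  have p0: "p > 0" using assms(1) prime_gt_0_nat by blast
  define S where "S = {W. is_subspace p n W \<and> has_dim p W k}"
  have finS: "finite S" unfolding S_def using subspaces_finite[OF p0] .
  have U: "(\<Union>W\<in>S. Tset p W k) \<subseteq> funcs k (Fvecs p n) (\<lambda>_. 0)"
    using Tset_sub unfolding S_def is_subspace_def funcs_def by blast
  have finF: "finite (funcs k (Fvecs p n) (\<lambda>_. 0))" "card (funcs k (Fvecs p n) (\<lambda>_. 0)) = (p ^ n) ^ k"
    using card_funcs[of "Fvecs p n" k "\<lambda>_. 0"] Fvecs_card[OF p0] by auto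
  have each: "p ^ ((k - 1) * k) \<le> card (Tset p W k)" if "W \<in> S" for W
    using that dim_facts[OF assms(1)] Tset_card[OF assms(1)] unfolding S_def by blast
  have "card S * p ^ ((k - 1) * k) \<le> (\<Sum>W\<in>S. card (Tset p W k))"
    using sum_bounded_below[of S "p ^ ((k - 1) * k)" "\<lambda>W. card (Tset p W k)"] each by (simp add: mult.commute)
  also have "\<dots> = card (\<Union>W\<in>S. Tset p W k)"
  proof (rule card_UN_disjoint[symmetric])
    show "finite S" by (rule finS)
    show "\<forall>W\<in>S. finite (Tset p W k)" using Tset_finite dim_facts[OF assms(1)] unfolding S_def by blast
    show "\<forall>W\<in>S. \<forall>W'\<in>S. W \<noteq> W' \<longrightarrow> Tset p W k \<inter> Tset p W' k = {}"
      using Tset_spn[OF assms(1)] unfolding S_def by blast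
  qed
  also have "\<dots> \<le> (p ^ n) ^ k" using card_mono[OF finF(1) U] finF(2) by simp
  finally have A: "card S * p ^ ((k - 1) * k) \<le> p ^ (n * k)" by (simp add: power_mult)
  have "n * k = (k * (n - k) + k) + (k - 1) * k"
  proof (cases k)
    case 0 then show ?thesis by simp
  next
    case (Suc m)
    obtain r where "n = k + r" using assms(2) le_Suc_ex by blast
    then show ?thesis using Suc by (simp add: algebra_simps)
  qed
  then have "card S * p ^ ((k - 1) * k) \<le> p ^ (k * (n - k) + k) * p ^ ((k - 1) * k)"
    using A by (simp add: power_add)
  then have "card S \<le> p ^ (k * (n - k) + k)" using p0 by simp
  then show ?thesis unfolding pbinom_def S_def .
qed


definition Bm :: "nat \<Rightarrow> nat \<Rightarrow> (nat \<Rightarrow> nat \<Rightarrow> nat) \<Rightarrow> nat \<Rightarrow> nat \<Rightarrow> nat" where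
  "Bm k n M j i = (if i < k then (if i = j then 1 else 0) else if i < n then M j (i - k) else 0)"

lemma Bm_Fvecs:
  assumes "k \<le> n" "p > 1" "M \<in> funcs k (Fvecs p (n - k)) (\<lambda>_. 0)" "j < k"
  shows "Bm k n M j \<in> Fvecs p n"
  using assms unfolding Bm_def Fvecs_def funcs_def by auto

lemma lincomb_Bm: "i < k \<Longrightarrow> lincomb p c (Bm k n M) k i = c i mod p"
proof -
  assume i: "i < k"
  have "(\<Sum>l<k. c l * Bm k n M l i) = (\<Sum>l<k. if l = i then c l else 0)"
    by (rule sum.cong) (auto simp: Bm_def i)
  also have "\<dots> = c i" using i by (simp add: sum.delta)
  finally show ?thesis unfolding lincomb_def by simp
qed

lemma lincomb_delta:
  assumes "j < k" "\<And>l. l < k \<Longrightarrow> b l \<in> Fvecs p n"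
  shows "lincomb p (\<lambda>l. if l = j then 1 else 0) b k = b j"
proof
  fix i
  have "(\<Sum>l<k. (if l = j then 1 else 0) * b l i) = (\<Sum>l<k. if l = j then b l i else 0)"
    by (rule sum.cong) auto
  also have "\<dots> = b j i" using assms(1) by (simp add: sum.delta)
  finally show "lincomb p (\<lambda>l. if l = j then 1 else 0) b k i = b j i"
    unfolding lincomb_def using assms unfolding Fvecs_def by auto
qed

lemma Phi_in:
  assumes "prime p" "k \<le> n" "M \<in> funcs k (Fvecs p (n - k)) (\<lambda>_. 0)"
  shows "is_subspace p n (spn p (Bm k n M) k) \<and> has_dim p (spn p (Bm k n M) k) k"
proof -
  have p1: "p > 1" using assms(1) prime_gt_1_nat by blast
  then have p0: "p > 0" by simp
  have BF: "\<And>j. j < k \<Longrightarrow> Bm k n M j \<in> Fvecs p n" using Bm_Fvecs[OF assms(2) p1 assms(3)] .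
  have "Bm k n M j \<in> spn p (Bm k n M) k" if "j < k" for j
  proof -
    have "Bm k n M j = lincomb p (\<lambda>l. if l = j then 1 else 0) (Bm k n M) k"
      using lincomb_delta[OF that BF] by simp
    moreover have "\<forall>l<k. (if l = j then 1 else 0) < p" using p1 by auto
    ultimately show ?thesis unfolding spn_def by blast
  qed
  moreover have "indep p (Bm k n M) k"
    unfolding indep_def
  proof (intro allI impI)
    fix c l assume c: "\<forall>j<k. c j < p" and z: "lincomb p c (Bm k n M) k = (\<lambda>_. 0)" and l: "l < k"
    have "c l mod p = 0" using fun_cong[OF z, of l] lincomb_Bm[OF l] by simp
    then show "c l = 0" using c l by simp
  qed
  moreover have "is_subspace p n (spn p (Bm k n M) k)" by (rule spn_subspace[OF p0]) (rule BF)
  ultimately show ?thesis unfolding has_dim_alt by blast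
qed

lemma Phi_inj:
  assumes "prime p" "k \<le> n"
  shows "inj_on (\<lambda>M. spn p (Bm k n M) k) (funcs k (Fvecs p (n - k)) (\<lambda>_. 0))"
proof (rule inj_onI)
  fix M M' assume M: "M \<in> funcs k (Fvecs p (n - k)) (\<lambda>_. 0)" and M': "M' \<in> funcs k (Fvecs p (n - k)) (\<lambda>_. 0)"
    and e: "spn p (Bm k n M) k = spn p (Bm k n M') k"
  have p1: "p > 1" using assms(1) prime_gt_1_nat by blast
  then have p0: "p > 0" by simp
  have BF: "\<And>j. j < k \<Longrightarrow> Bm k n M j \<in> Fvecs p n" using Bm_Fvecs[OF assms(2) p1 M] .
  have BF': "\<And>j. j < k \<Longrightarrow> Bm k n M' j \<in> Fvecs p n" using Bm_Fvecs[OF assms(2) p1 M'] .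
  have BB: "Bm k n M j = Bm k n M' j" if j: "j < k" for j
  proof -
    have "Bm k n M j = lincomb p (\<lambda>l. if l = j then 1 else 0) (Bm k n M) k"
      using lincomb_delta[OF that BF] by simp
    moreover have "\<forall>l<k. (if l = j then 1 else 0) < p" using p1 by auto
    ultimately have "Bm k n M j \<in> spn p (Bm k n M) k" unfolding spn_def by blast
    then have "Bm k n M j \<in> spn p (Bm k n M') k" using e by simp
    then obtain c where c: "\<forall>l<k. c l < p" and ce: "Bm k n M j = lincomb p c (Bm k n M') k"
      unfolding spn_def by blast
    have "c l = (if l = j then 1 else 0)" if l: "l < k" for l
    proof -
      have "Bm k n M j l = c l mod p" using ce lincomb_Bm[OF l] by simp
      then show ?thesis using c l unfolding Bm_def by auto
    qed
    then have "lincomb p c (Bm k n M') k = lincomb p (\<lambda>l. if l = j then 1 else 0) (Bm k n M') k"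
      by (intro lincomb_cong_coeff) simp
    also have "\<dots> = Bm k n M' j" using lincomb_delta[OF j BF'] .
    finally show ?thesis using ce by simp
  qed
  show "M = M'"
  proof (intro ext)
    fix j l show "M j l = M' j l"
    proof (cases "j < k \<and> l < n - k")
      case True
      then have "M j l = Bm k n M j (k + l)" "M' j l = Bm k n M' j (k + l)" unfolding Bm_def by auto
      then show ?thesis using BB True by simp
    next
      case False
      show ?thesis
      proof (cases "j < k")
        case True
        then have "l \<ge> n - k" using False by simp
        then show ?thesis using M M' True unfolding funcs_def Fvecs_def by auto
      next
        case False
        then show ?thesis using M M' unfolding funcs_def by auto
      qed
    qed
  qed
qed

lemma pbinom_lower:
  assumes "prime p" "k \<le> n"
  shows "p ^ (k * (n - k)) \<le> pbinom p n k"
proof -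
  have p0: "p > 0" using assms(1) prime_gt_0_nat by blast
  define Mats where "Mats = funcs k (Fvecs p (n - k)) (\<lambda>_. 0)"
  have "card Mats = (p ^ (n - k)) ^ k" unfolding Mats_def
    using card_funcs[of "Fvecs p (n - k)" k "\<lambda>_. 0"] Fvecs_card[OF p0] by auto
  also have "\<dots> = p ^ (k * (n - k))" by (simp add: power_mult[symmetric] mult.commute)
  finally have cM: "card Mats = p ^ (k * (n - k))" .
  have "card Mats = card ((\<lambda>M. spn p (Bm k n M) k) ` Mats)"
    unfolding Mats_def using card_image[OF Phi_inj[OF assms]] by simp
  also have "\<dots> \<le> card {W. is_subspace p n W \<and> has_dim p W k}"
    by (rule card_mono[OF subspaces_finite[OF p0]]) (use Phi_in[OF assms(1,2)] in \<open>auto simp: Mats_def\<close>)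
  finally show ?thesis unfolding pbinom_def cM .
qed


lemma telescope:
  fixes nu :: "nat \<Rightarrow> nat"
  assumes "\<And>i. i \<ge> 1 \<Longrightarrow> nu (Suc i) \<le> nu i"
  shows "(\<Sum>i=1..M. nu i - nu (Suc i)) + nu (Suc M) = nu 1"
proof (induction M)
  case 0 then show ?case by simp
next
  case (Suc M)
  have h: "nu (Suc (Suc M)) \<le> nu (Suc M)" using assms[of "Suc M"] by simp
  have "(\<Sum>i=1..Suc M. nu i - nu (Suc i)) = (\<Sum>i=1..M. nu i - nu (Suc i)) + (nu (Suc M) - nu (Suc (Suc M)))"
    by (rule sum.cl_ivl_Suc[THEN trans]) simp
  then show ?case using Suc.IH h by linarith
qed

theorem proposition6p3:
  fixes p :: nat and lam nu :: "nat \<Rightarrow> nat" and N :: nat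
  assumes "prime p"
    and "\<And>i. i \<ge> 1 \<Longrightarrow> lam (Suc i) \<le> lam i"
    and "\<And>i. i \<ge> 1 \<Longrightarrow> nu (Suc i) \<le> nu i"
    and "\<And>i. i \<ge> 1 \<Longrightarrow> nu i \<le> lam i"
    and "\<And>i. i > N \<Longrightarrow> lam i = 0"
  shows "(\<Prod>i=1..N. p ^ (nu i * (lam i - nu i)))
           \<le> (\<Prod>i=1..N. p ^ (nu (Suc i) * (lam i - nu i)) * pbinom p (lam i - nu (Suc i)) (nu i - nu (Suc i)))
       \<and> (\<Prod>i=1..N. p ^ (nu (Suc i) * (lam i - nu i)) * pbinom p (lam i - nu (Suc i)) (nu i - nu (Suc i)))
           \<le> p ^ (nu 1) * (\<Prod>i=1..N. p ^ (nu i * (lam i - nu i)))"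
proof -
  have p0: "p > 0" using assms(1) prime_gt_0_nat by blast
  define f where "f i = p ^ (nu i * (lam i - nu i))" for i
  define g where "g i = p ^ (nu (Suc i) * (lam i - nu i)) * pbinom p (lam i - nu (Suc i)) (nu i - nu (Suc i))" for i
  have bounds: "f i \<le> g i \<and> g i \<le> f i * p ^ (nu i - nu (Suc i))" if i: "i \<in> {1..N}" for i
  proof -
    have h1: "nu (Suc i) \<le> nu i" "nu i \<le> lam i" using assms(3,4) i by auto
    define x where "x = lam i - nu i"
    define k where "k = nu i - nu (Suc i)"
    define m where "m = lam i - nu (Suc i)"
    have km: "k \<le> m" "m - k = x" unfolding k_def m_def x_def using h1 by auto
    have nk: "nu i = nu (Suc i) + k" unfolding k_def using h1 by simp
    have nx: "nu i * x = nu (Suc i) * x + k * x" by (subst nk) (simp add: add_mult_distrib)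
    have L: "p ^ (k * x) \<le> pbinom p m k" using pbinom_lower[OF assms(1) km(1)] km(2) by simp
    have U: "pbinom p m k \<le> p ^ (k * x + k)" using pbinom_upper[OF assms(1) km(1)] km(2) by simp
    have "f i = p ^ (nu (Suc i) * x) * p ^ (k * x)" unfolding f_def x_def[symmetric] nx by (simp add: power_add)
    also have "\<dots> \<le> g i" unfolding g_def x_def[symmetric] k_def[symmetric] m_def[symmetric] using L by simp
    finally have A: "f i \<le> g i" .
    have "g i \<le> p ^ (nu (Suc i) * x) * p ^ (k * x + k)"
      unfolding g_def x_def[symmetric] k_def[symmetric] m_def[symmetric] using U by simp
    also have "\<dots> = f i * p ^ k" unfolding f_def x_def[symmetric] nx by (simp add: power_add)
    finally show ?thesis using A unfolding k_def by simp
  qed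
  have P1: "(\<Prod>i=1..N. f i) \<le> (\<Prod>i=1..N. g i)"
    by (rule prod_mono) (use bounds in auto)
  have "(\<Prod>i=1..N. g i) \<le> (\<Prod>i=1..N. f i * p ^ (nu i - nu (Suc i)))"
    by (rule prod_mono) (use bounds in auto)
  also have "\<dots> = (\<Prod>i=1..N. f i) * p ^ (\<Sum>i=1..N. nu i - nu (Suc i))"
    by (simp add: prod.distrib power_sum)
  also have "\<dots> \<le> (\<Prod>i=1..N. f i) * p ^ (nu 1)"
  proof -
    have "(\<Sum>i=1..N. nu i - nu (Suc i)) \<le> nu 1" using telescope[of nu N] assms(3) by fastforce
    then have "p ^ (\<Sum>i=1..N. nu i - nu (Suc i)) \<le> p ^ (nu 1)" using p0 by (intro power_increasing) auto
    then show ?thesis by simp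
  qed
  finally have P2: "(\<Prod>i=1..N. g i) \<le> p ^ (nu 1) * (\<Prod>i=1..N. f i)" by (simp add: mult.commute)
  show ?thesis using P1[unfolded f_def g_def] P2[unfolded f_def g_def] by (rule conjI)
qed

end
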